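(* If $(E,\mathcal L)$ is an exact local representation over an infinite set $B$, then $|E|\ge 2^{2^{|B|}}$.
   Context: A local representation over a set $B$ is a pair $(E,\mathcal L)$ with $\mathcal L$ an ultrafilter on the cylinder Boolean algebra of $B^E$ (sets $\{\psi\in B^E:(\psi_{e_1},\dots,\psi_{e_n})\in R\}$, $e_i\in E$, $R\subseteq B^n$). Separated: $\{\psi:\psi_{e_1}=\psi_{e_2}\}\in\mathcal L$ only if $e_1=e_2$. For $\eta:I\to E$, the pullback of $\mathcal L$ by $\eta$ is the ultrafilter of cylinders $C\subseteq B^I$ with $\{\psi:(\psi_{\eta(i)})_{i\in I}\in C\}\in\mathcal L$; projection to $B^I$ of an ultrafilter on the cylinders of $B^{I\cup\{i_0\}}$ ($i_0\notin I$) consists of the cylinders of $B^I$ whose preimage under restriction lies in it. $(E,\mathcal L)$ is exact if it is separated and for every finite $I$, $i_0\notin I$, $\eta:I\to E$, and ultrafilter $\mathcal U$ on $\mathcal P(B^{I\cup\{i_0\}})$ projecting to the pullback of $\mathcal L$ by $\eta$, there is $e\in E$ with the pullback of $\mathcal L$ by $\eta\cup\{i_0\mapsto e\}$ equal to $\mathcal U$ (in particular, with $I=\emptyset$: every ultrafilter $\mathcal U$ on $B$ equals $\{S\subseteq B:\{\psi:\psi_e\in S\}\in\mathcal L\}$ for some $e\in E$). *)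

theory Defs
  imports "HOL-Library.FuncSet"
begin

text \<open>The power B^E is modelled as the extensional function space PiE E (\<lambda>_. B).\<close>

definition cylinders :: "'e set \<Rightarrow> 'b set \<Rightarrow> ('e \<Rightarrow> 'b) set set" where
  "cylinders E B = {{\<psi> \<in> PiE E (\<lambda>_. B). map \<psi> es \<in> R} | es R.
      set es \<subseteq> E \<and> R \<subseteq> {xs. length xs = length es \<and> set xs \<subseteq> B}}"

definition ultrafilter_on :: "'a set \<Rightarrow> 'a set set \<Rightarrow> 'a set set \<Rightarrow> bool" where
  "ultrafilter_on X A U \<longleftrightarrow>
     U \<subseteq> A \<and> X \<in> U \<and> {} \<notin> U \<and>
     (\<forall>S\<in>U. \<forall>T\<in>U. S \<inter> T \<in> U) \<and>
     (\<forall>S\<in>U. \<forall>T\<in>A. S \<subseteq> T \<longrightarrow> T \<in> U) \<and>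
     (\<forall>S\<in>A. S \<in> U \<or> X - S \<in> U)"

definition local_representation :: "'b set \<Rightarrow> 'e set \<Rightarrow> ('e \<Rightarrow> 'b) set set \<Rightarrow> bool" where
  "local_representation B E L \<longleftrightarrow> ultrafilter_on (PiE E (\<lambda>_. B)) (cylinders E B) L"

definition separated :: "'b set \<Rightarrow> 'e set \<Rightarrow> ('e \<Rightarrow> 'b) set set \<Rightarrow> bool" where
  "separated B E L \<longleftrightarrow>
     (\<forall>e1\<in>E. \<forall>e2\<in>E. {\<psi> \<in> PiE E (\<lambda>_. B). \<psi> e1 = \<psi> e2} \<in> L \<longrightarrow> e1 = e2)"

definition pullback :: "'b set \<Rightarrow> 'e set \<Rightarrow> ('e \<Rightarrow> 'b) set set \<Rightarrow> 'i set \<Rightarrow> ('i \<Rightarrow> 'e)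
    \<Rightarrow> ('i \<Rightarrow> 'b) set set" where
  "pullback B E L I \<eta> =
     {C \<in> cylinders I B. {\<psi> \<in> PiE E (\<lambda>_. B). restrict (\<lambda>i. \<psi> (\<eta> i)) I \<in> C} \<in> L}"

definition projection :: "'b set \<Rightarrow> 'i set \<Rightarrow> 'i \<Rightarrow> ('i \<Rightarrow> 'b) set set \<Rightarrow> ('i \<Rightarrow> 'b) set set" where
  "projection B I i0 U =
     {C \<in> cylinders I B. {\<psi> \<in> PiE (insert i0 I) (\<lambda>_. B). restrict \<psi> I \<in> C} \<in> U}"

text \<open>Exactness. Finite index sets I are taken as finite sets of natural numbers
  (every finite index set is in bijection with one).\<close>
definition exact_rep :: "'b set \<Rightarrow> 'e set \<Rightarrow> ('e \<Rightarrow> 'b) set set \<Rightarrow> bool" where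
  "exact_rep B E L \<longleftrightarrow> local_representation B E L \<and> separated B E L \<and>
     (\<forall>(I::nat set) i0 (\<eta>::nat \<Rightarrow> 'e) U.
        finite I \<longrightarrow> i0 \<notin> I \<longrightarrow> \<eta> ` I \<subseteq> E \<longrightarrow>
        ultrafilter_on (PiE (insert i0 I) (\<lambda>_. B)) (Pow (PiE (insert i0 I) (\<lambda>_. B))) U \<longrightarrow>
        projection B I i0 U = pullback B E L I \<eta> \<longrightarrow>
        (\<exists>e\<in>E. pullback B E L (insert i0 I) (\<eta>(i0 := e)) = U))"

end

theory Submission imports Defs "HOL-Algebra.Free_Abelian_Groups" begin

definition fip :: "'a set \<Rightarrow> 'a set set \<Rightarrow> bool" where
  "fip Y H \<longleftrightarrow> (\<forall>F. finite F \<longrightarrow> F \<subseteq> H \<longrightarrow> Y \<inter> \<Inter>F \<noteq> {})"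

lemma fipD: "fip Y H \<Longrightarrow> finite F \<Longrightarrow> F \<subseteq> H \<Longrightarrow> Y \<inter> \<Inter>F \<noteq> {}"
  unfolding fip_def by blast

lemma fipI: "(\<And>F. finite F \<Longrightarrow> F \<subseteq> H \<Longrightarrow> Y \<inter> \<Inter>F \<noteq> {}) \<Longrightarrow> fip Y H"
  unfolding fip_def by blast

lemma not_fipE: "\<not> fip Y H \<Longrightarrow> (\<And>F. finite F \<Longrightarrow> F \<subseteq> H \<Longrightarrow> Y \<inter> \<Inter>F = {} \<Longrightarrow> P) \<Longrightarrow> P"
  unfolding fip_def by blast

lemma fip_max_add:
  assumes M: "fip Y M" "M \<subseteq> Pow Y" and S: "S \<subseteq> Y"
  shows "fip Y (insert S M) \<or> fip Y (insert (Y - S) M)"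
proof (rule ccontr)
  assume "\<not> ?thesis"
  then have n1: "\<not> fip Y (insert S M)" and n2: "\<not> fip Y (insert (Y - S) M)" by simp_all
  obtain F1 where F1: "finite F1" "F1 \<subseteq> insert S M" "Y \<inter> \<Inter>F1 = {}"
    using not_fipE[OF n1] by metis
  obtain F2 where F2: "finite F2" "F2 \<subseteq> insert (Y-S) M" "Y \<inter> \<Inter>F2 = {}"
    using not_fipE[OF n2] by metis
  let ?F = "(F1 - {S}) \<union> (F2 - {Y - S})"
  have fin: "finite ?F" using F1(1) F2(1) by simp
  have sub: "?F \<subseteq> M" using F1(2) F2(2) by blast
  have ne: "Y \<inter> \<Inter>?F \<noteq> {}" by (rule fipD[OF M(1) fin sub])
  then obtain y where y: "y \<in> Y" "y \<in> \<Inter>?F" by blast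
  have y1: "y \<in> T" if "T \<in> F1" "T \<noteq> S" for T using y that by blast
  have y2: "y \<in> T" if "T \<in> F2" "T \<noteq> Y - S" for T using y that by blast
  show False
  proof (cases "y \<in> S")
    case True
    then have "y \<in> \<Inter>F1" using y1 by blast
    then show False using F1(3) y(1) by blast
  next
    case False
    then have "y \<in> \<Inter>F2" using y2 y(1) by blast
    then show False using F2(3) y(1) by blast
  qed
qed

lemma ultrafilter_lemma:
  assumes G: "G \<subseteq> Pow Y" "fip Y G"
  shows "\<exists>U. ultrafilter_on Y (Pow Y) U \<and> G \<subseteq> U"
proof -
  let ?A = "{H. G \<subseteq> H \<and> H \<subseteq> Pow Y \<and> fip Y H}"
  have "\<exists>M\<in>?A. \<forall>X\<in>?A. M \<subseteq> X \<longrightarrow> X = M"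
  proof (rule subset_Zorn_nonempty)
    show "?A \<noteq> {}" using G by blast
  next
    fix C assume C: "C \<noteq> {}" "subset.chain ?A C"
    have CA: "C \<subseteq> ?A" using C(2) unfolding subset.chain_def by (rule conjunct1)
    have "fip Y (\<Union>C)"
    proof (rule fipI)
      fix F assume F: "finite F" "F \<subseteq> \<Union>C"
      obtain H where H: "H \<in> C" "F \<subseteq> H" using finite_subset_Union_chain[OF F C] by blast
      have "fip Y H" using CA H(1) by blast
      then show "Y \<inter> \<Inter>F \<noteq> {}" using fipD F(1) H(2) by blast
    qed
    moreover have "G \<subseteq> \<Union>C" using CA C(1) by blast
    moreover have "\<Union>C \<subseteq> Pow Y" using CA by blast
    ultimately show "\<Union>C \<in> ?A" by blast
  qed
  then obtain M where MA: "M \<in> ?A" and max0: "\<forall>X\<in>?A. M \<subseteq> X \<longrightarrow> X = M" by (rule bexE)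
  have M: "G \<subseteq> M" "M \<subseteq> Pow Y" "fip Y M" using MA by simp_all
  have max: "X = M" if "X \<in> ?A" "M \<subseteq> X" for X using max0 that by simp
  have add: "S \<in> M" if "S \<subseteq> Y" "fip Y (insert S M)" for S
  proof -
    have "insert S M \<in> ?A" using that M by blast
    then have "insert S M = M" by (rule max) (rule subset_insertI)
    then show ?thesis by (metis insertI1)
  qed
  have nonempty: "Y \<inter> \<Inter>F \<noteq> {}" if "finite F" "F \<subseteq> M" for F
    by (rule fipD[OF M(3) that])
  have u1: "Y \<in> M"
  proof (rule add)
    show "fip Y (insert Y M)"
    proof (rule fipI)
      fix F assume F: "finite F" "F \<subseteq> insert Y M"
      have "Y \<inter> \<Inter>(F - {Y}) \<noteq> {}" using nonempty F by blast
      moreover have "Y \<inter> \<Inter>F = Y \<inter> \<Inter>(F - {Y})" by blast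
      ultimately show "Y \<inter> \<Inter>F \<noteq> {}" by simp
    qed
  qed simp
  have u2: "{} \<notin> M" using nonempty[of "{{}}"] by blast
  have u3: "S \<inter> T \<in> M" if ST: "S \<in> M" "T \<in> M" for S T
  proof (rule add)
    show "S \<inter> T \<subseteq> Y" using ST M(2) by blast
    show "fip Y (insert (S \<inter> T) M)"
    proof (rule fipI)
      fix F assume F: "finite F" "F \<subseteq> insert (S \<inter> T) M"
      let ?F = "insert S (insert T (F - {S \<inter> T}))"
      have "finite ?F" using F(1) by simp
      moreover have "?F \<subseteq> M" using F(2) ST by blast
      ultimately have "Y \<inter> \<Inter>?F \<noteq> {}" by (rule nonempty)
      moreover have "Y \<inter> \<Inter>?F \<subseteq> Y \<inter> \<Inter>F" by blast
      ultimately show "Y \<inter> \<Inter>F \<noteq> {}" by blast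
    qed
  qed
  have u4: "T \<in> M" if ST: "S \<in> M" "T \<in> Pow Y" "S \<subseteq> T" for S T
  proof (rule add)
    show "T \<subseteq> Y" using ST by blast
    show "fip Y (insert T M)"
    proof (rule fipI)
      fix F assume F: "finite F" "F \<subseteq> insert T M"
      let ?F = "insert S (F - {T})"
      have "finite ?F" using F(1) by simp
      moreover have "?F \<subseteq> M" using F(2) ST by blast
      ultimately have "Y \<inter> \<Inter>?F \<noteq> {}" by (rule nonempty)
      moreover have "Y \<inter> \<Inter>?F \<subseteq> Y \<inter> \<Inter>F" using ST(3) by blast
      ultimately show "Y \<inter> \<Inter>F \<noteq> {}" by blast
    qed
  qed
  have u5: "S \<in> M \<or> Y - S \<in> M" if S: "S \<in> Pow Y" for S
  proof -
    have "S \<subseteq> Y" "Y - S \<subseteq> Y" using S by auto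
    then show ?thesis using fip_max_add[OF M(3) M(2), of S] add by blast
  qed
  have "ultrafilter_on Y (Pow Y) M"
    unfolding ultrafilter_on_def using M(2) u1 u2 u3 u4 u5 by blast
  then show ?thesis using M(1) by blast
qed


lemma indep_point:
  fixes B :: "'b set"
  assumes P: "finite P" "P \<subseteq> Pow B" and N: "finite N" "N \<subseteq> Pow B" and PN: "P \<inter> N = {}"
  shows "\<exists>F0 \<Phi>0. finite F0 \<and> F0 \<subseteq> B \<and> \<Phi>0 \<subseteq> Pow F0 \<and> (\<forall>A\<in>P. A \<inter> F0 \<in> \<Phi>0)
     \<and> (\<forall>A\<in>N. A \<inter> F0 \<notin> \<Phi>0)"
proof -
  let ?Q = "P \<union> N"
  let ?pr = "{(A,A'). A \<in> ?Q \<and> A' \<in> ?Q \<and> A \<noteq> A'}"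
  define c where "c = (\<lambda>(A::'b set,A'). SOME x. x \<in> (A - A') \<union> (A' - A))"
  define F0 where "F0 = c ` ?pr"
  have cin: "c (A,A') \<in> (A - A') \<union> (A' - A)" if "A \<noteq> A'" for A A'
  proof -
    have "\<exists>x. x \<in> (A - A') \<union> (A' - A)" using that by blast
    from someI_ex[OF this] show ?thesis unfolding c_def by simp
  qed
  have fin: "finite F0" unfolding F0_def
    by (rule finite_imageI, rule finite_subset[of _ "?Q \<times> ?Q"]) (use P N in auto)
  have sub: "F0 \<subseteq> B"
  proof
    fix x assume "x \<in> F0"
    then obtain A A' where "A \<in> ?Q" "A' \<in> ?Q" "A \<noteq> A'" "x = c (A,A')" unfolding F0_def by auto
    then show "x \<in> B" using cin[of A A'] P N by blast
  qed
  have dist: "A \<inter> F0 \<noteq> A' \<inter> F0" if "A \<in> ?Q" "A' \<in> ?Q" "A \<noteq> A'" for A A'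
  proof -
    have "c (A,A') \<in> F0" unfolding F0_def using that by auto
    then show ?thesis using cin[OF that(3)] by blast
  qed
  define \<Phi>0 where "\<Phi>0 = (\<lambda>A. A \<inter> F0) ` P"
  have "\<forall>A\<in>N. A \<inter> F0 \<notin> \<Phi>0"
  proof (intro ballI notI)
    fix A assume A: "A \<in> N" "A \<inter> F0 \<in> \<Phi>0"
    then obtain A' where "A' \<in> P" "A \<inter> F0 = A' \<inter> F0" unfolding \<Phi>0_def by auto
    moreover have "A \<noteq> A'" using A \<open>A' \<in> P\<close> PN by blast
    ultimately show False using dist[of A A'] A by auto
  qed
  moreover have "\<Phi>0 \<subseteq> Pow F0" unfolding \<Phi>0_def by auto
  moreover have "\<forall>A\<in>P. A \<inter> F0 \<in> \<Phi>0" unfolding \<Phi>0_def by auto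
  ultimately show ?thesis using fin sub by blast
qed

lemma ultra_compl: "ultrafilter_on Y A U \<Longrightarrow> S \<in> U \<Longrightarrow> Y - S \<in> U \<Longrightarrow> False"
  unfolding ultrafilter_on_def by (metis Diff_disjoint)

lemma split_sub: "F \<subseteq> X \<union> Z \<Longrightarrow> F \<inter> X = X' \<Longrightarrow> F \<inter> Z = Z' \<Longrightarrow> F \<subseteq> X' \<union> Z'"
  by blast

lemma pospisil_Y:
  fixes B :: "'b set"
  defines "Y \<equiv> {(F,\<Phi>). finite F \<and> F \<subseteq> B \<and> \<Phi> \<subseteq> Pow F}"
  shows "\<exists>h. inj_on h (Pow (Pow B)) \<and> (\<forall>S\<in>Pow (Pow B). ultrafilter_on Y (Pow Y) (h S))"
proof -
  define YA where "YA A = {(F,\<Phi>) \<in> Y. A \<inter> F \<in> \<Phi>}" for A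
  define G where "G S = YA ` S \<union> (\<lambda>A. Y - YA A) ` (Pow B - S)" for S
  have GY: "G S \<subseteq> Pow Y" for S unfolding G_def YA_def by auto
  have fipG: "fip Y (G S)" if S: "S \<subseteq> Pow B" for S
    unfolding fip_def
  proof (intro allI impI)
    fix F assume F: "finite F" "F \<subseteq> G S"
    have sub1: "F \<inter> YA ` S \<subseteq> YA ` S" by (rule Int_lower2)
    have fin1: "finite (F \<inter> YA ` S)" using F(1) by simp
    obtain P where P: "P \<subseteq> S" "finite P" "F \<inter> YA ` S = YA ` P"
      using finite_subset_image[OF fin1 sub1] by (elim exE conjE)
    have sub2: "F \<inter> (\<lambda>A. Y - YA A) ` (Pow B - S) \<subseteq> (\<lambda>A. Y - YA A) ` (Pow B - S)" by (rule Int_lower2)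
    have fin2: "finite (F \<inter> (\<lambda>A. Y - YA A) ` (Pow B - S))" using F(1) by simp
    obtain N where N: "N \<subseteq> Pow B - S" "finite N"
        "F \<inter> (\<lambda>A. Y - YA A) ` (Pow B - S) = (\<lambda>A. Y - YA A) ` N"
      using finite_subset_image[OF fin2 sub2] by (elim exE conjE)
    have F2': "F \<subseteq> YA ` S \<union> (\<lambda>A. Y - YA A) ` (Pow B - S)" using F(2) unfolding G_def .
    have Fsub: "F \<subseteq> YA ` P \<union> (\<lambda>A. Y - YA A) ` N" by (rule split_sub[OF F2' P(3) N(3)])
    obtain F0 \<Phi>0 where pt: "finite F0" "F0 \<subseteq> B" "\<Phi>0 \<subseteq> Pow F0" "\<forall>A\<in>P. A \<inter> F0 \<in> \<Phi>0"
        "\<forall>A\<in>N. A \<inter> F0 \<notin> \<Phi>0"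
    proof -
      have a: "P \<subseteq> Pow B" using P(1) S by (rule subset_trans)
      have b: "N \<subseteq> Pow B" using N(1) by (rule subset_trans) (rule Diff_subset)
      have c: "P \<inter> N = {}" using P(1) N(1) by blast
      show thesis using indep_point[OF P(2) a N(2) b c] that by (elim exE conjE)
    qed
    have inY: "(F0,\<Phi>0) \<in> Y" unfolding Y_def using pt by auto
    have "(F0,\<Phi>0) \<in> \<Inter>F"
    proof
      fix T assume "T \<in> F"
      then have "T \<in> YA ` P \<or> T \<in> (\<lambda>A. Y - YA A) ` N" using Fsub by blast
      then show "(F0,\<Phi>0) \<in> T" using pt inY unfolding YA_def by auto
    qed
    then show "Y \<inter> \<Inter>F \<noteq> {}" using inY by blast
  qed
  have "\<forall>S. \<exists>U. S \<subseteq> Pow B \<longrightarrow> ultrafilter_on Y (Pow Y) U \<and> G S \<subseteq> U"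
    using ultrafilter_lemma[OF GY fipG] by blast
  then obtain h where h0: "\<forall>S. S \<subseteq> Pow B \<longrightarrow> ultrafilter_on Y (Pow Y) (h S) \<and> G S \<subseteq> h S"
    by (rule choice[THEN exE])
  have h: "ultrafilter_on Y (Pow Y) (h S) \<and> G S \<subseteq> h S" if "S \<subseteq> Pow B" for S
    using h0 that by simp
  have sep: "h T \<noteq> h T'" if T: "T \<subseteq> Pow B" "T' \<subseteq> Pow B" "A \<in> T" "A \<notin> T'" for T T' A
  proof
    assume eq: "h T = h T'"
    have AB: "A \<in> Pow B" using T(1) T(3) by (rule subsetD)
    have "YA A \<in> G T" unfolding G_def by (rule UnI1, rule imageI, rule T(3))
    then have 1: "YA A \<in> h T" using h[OF T(1)] by (rule_tac subsetD) (erule conjunct2)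
    have "Y - YA A \<in> G T'" unfolding G_def
      by (rule UnI2, rule imageI, rule DiffI, rule AB, rule T(4))
    then have 2: "Y - YA A \<in> h T" unfolding eq using h[OF T(2)] by (rule_tac subsetD) (erule conjunct2)
    have u: "ultrafilter_on Y (Pow Y) (h T)" using h[OF T(1)] by (rule conjunct1)
    show False by (rule ultra_compl[OF u 1 2])
  qed
  have "inj_on h (Pow (Pow B))"
  proof (rule inj_onI)
    fix S S' assume SS: "S \<in> Pow (Pow B)" "S' \<in> Pow (Pow B)" "h S = h S'"
    have S1: "S \<subseteq> Pow B" and S2: "S' \<subseteq> Pow B" using SS(1,2) by simp_all
    show "S = S'"
    proof (rule ccontr)
      assume "S \<noteq> S'"
      then obtain A where "(A \<in> S \<and> A \<notin> S') \<or> (A \<in> S' \<and> A \<notin> S)" by blast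
      then show False
      proof
        assume "A \<in> S \<and> A \<notin> S'"
        then show False using sep[OF S1 S2, of A] SS(3) by simp
      next
        assume "A \<in> S' \<and> A \<notin> S"
        then show False using sep[OF S2 S1, of A] SS(3) by simp
      qed
    qed
  qed
  moreover have "\<forall>S\<in>Pow (Pow B). ultrafilter_on Y (Pow Y) (h S)"
  proof
    fix S assume "S \<in> Pow (Pow B)"
    then have "S \<subseteq> Pow B" by simp
    then show "ultrafilter_on Y (Pow Y) (h S)" using h by (rule_tac conjunct1) (rule h)
  qed
  ultimately show ?thesis by (rule_tac exI[of _ h]) (rule conjI)
qed


lemma Y_lepoll: "infinite (B::'b set) \<Longrightarrow> {(F,\<Phi>). finite F \<and> F \<subseteq> B \<and> \<Phi> \<subseteq> Pow F} \<lesssim> B"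
proof -
  assume inf: "infinite B"
  have "{(F,\<Phi>). finite F \<and> F \<subseteq> B \<and> \<Phi> \<subseteq> Pow F} \<subseteq> Fpow B \<times> Fpow (Fpow B)"
    by (auto simp: Fpow_def intro: finite_subset)
  then have "{(F,\<Phi>). finite F \<and> F \<subseteq> B \<and> \<Phi> \<subseteq> Pow F} \<lesssim> Fpow B \<times> Fpow (Fpow B)"
    by (rule subset_imp_lepoll)
  also have "Fpow B \<times> Fpow (Fpow B) \<approx> B \<times> B"
  proof (rule times_eqpoll_cong)
    show fp: "Fpow B \<approx> B" using eqpoll_Fpow inf by blast
    then have "infinite (Fpow B)" using inf eqpoll_finite_iff by blast
    then show "Fpow (Fpow B) \<approx> B" using eqpoll_Fpow fp eqpoll_trans by blast
  qed
  also have "B \<times> B \<approx> B"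
    using inf card_of_Times_same_infinite eqpoll_iff_card_of_ordIso by blast
  finally show ?thesis .
qed

lemma ultra_sub: "ultrafilter_on Y A U \<Longrightarrow> T \<in> U \<Longrightarrow> T \<in> A"
  unfolding ultrafilter_on_def by (elim conjE) (erule subsetD)

definition push :: "('y \<Rightarrow> 'x) \<Rightarrow> 'y set \<Rightarrow> 'x set \<Rightarrow> 'y set set \<Rightarrow> 'x set set" where
  "push g Y X U = {T \<in> Pow X. {y\<in>Y. g y \<in> T} \<in> U}"

lemma push_ultra:
  assumes g: "g ` Y \<subseteq> X" and U: "ultrafilter_on Y (Pow Y) U"
  shows "ultrafilter_on X (Pow X) (push g Y X U)"
proof -
  have pre: "{y\<in>Y. g y \<in> X} = Y" using g by auto
  have pe: "{y\<in>Y. g y \<in> {}} = {}" by simp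
  have pi: "{y\<in>Y. g y \<in> S \<inter> T} = {y\<in>Y. g y \<in> S} \<inter> {y\<in>Y. g y \<in> T}" for S T by auto
  have pd: "{y\<in>Y. g y \<in> X - S} = Y - {y\<in>Y. g y \<in> S}" for S using g by auto
  have pm: "S \<subseteq> T \<Longrightarrow> {y\<in>Y. g y \<in> S} \<subseteq> {y\<in>Y. g y \<in> T}" for S T by auto
  have U': "U \<subseteq> Pow Y" "Y \<in> U" "{} \<notin> U" "\<And>S T. S \<in> U \<Longrightarrow> T \<in> U \<Longrightarrow> S \<inter> T \<in> U"
    "\<And>S T. S \<in> U \<Longrightarrow> T \<in> Pow Y \<Longrightarrow> S \<subseteq> T \<Longrightarrow> T \<in> U"
    "\<And>S. S \<in> Pow Y \<Longrightarrow> S \<in> U \<or> Y - S \<in> U"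
    using U unfolding ultrafilter_on_def by blast+
  show ?thesis unfolding ultrafilter_on_def push_def
  proof (intro conjI ballI impI)
    show "{T \<in> Pow X. {y \<in> Y. g y \<in> T} \<in> U} \<subseteq> Pow X" by blast
    show "X \<in> {T \<in> Pow X. {y \<in> Y. g y \<in> T} \<in> U}" using pre U'(2) by simp
    show "{} \<notin> {T \<in> Pow X. {y \<in> Y. g y \<in> T} \<in> U}" using pe U'(3) by simp
  next
    fix S T assume "S \<in> {T \<in> Pow X. {y \<in> Y. g y \<in> T} \<in> U}" "T \<in> {T \<in> Pow X. {y \<in> Y. g y \<in> T} \<in> U}"
    then show "S \<inter> T \<in> {T \<in> Pow X. {y \<in> Y. g y \<in> T} \<in> U}" using U'(4) pi by auto
  next
    fix S T assume "S \<in> {T \<in> Pow X. {y \<in> Y. g y \<in> T} \<in> U}" "T \<in> Pow X" "S \<subseteq> T"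
    then show "T \<in> {T \<in> Pow X. {y \<in> Y. g y \<in> T} \<in> U}" using U'(5)[of _ "{y \<in> Y. g y \<in> T}"] pm[of S T] by auto
  next
    fix S assume "S \<in> Pow X"
    then show "S \<in> {T \<in> Pow X. {y \<in> Y. g y \<in> T} \<in> U} \<or> X - S \<in> {T \<in> Pow X. {y \<in> Y. g y \<in> T} \<in> U}"
      using U'(6)[of "{y \<in> Y. g y \<in> S}"] pd[of S] by auto
  qed
qed

lemma push_inj:
  assumes g: "inj_on g Y" "g ` Y \<subseteq> X" and U: "ultrafilter_on Y (Pow Y) U" "ultrafilter_on Y (Pow Y) U'"
    and eq: "push g Y X U = push g Y X U'"
  shows "U = U'"
proof -
  have key: "T \<in> V \<longleftrightarrow> g ` T \<in> push g Y X V" if "T \<subseteq> Y" for T V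
  proof -
    have pre: "{y\<in>Y. g y \<in> g ` T} = T"
    proof (rule equalityI; rule subsetI)
      fix y assume "y \<in> {y\<in>Y. g y \<in> g ` T}"
      then obtain t where "y \<in> Y" "t \<in> T" "g y = g t" by blast
      then show "y \<in> T" using g(1) that inj_onD[of g Y y t] by blast
    next
      fix y assume "y \<in> T" then show "y \<in> {y\<in>Y. g y \<in> g ` T}" using that by blast
    qed
    have "g ` T \<subseteq> X" using g(2) that by blast
    then show ?thesis unfolding push_def using pre by simp
  qed
  show ?thesis
  proof (rule equalityI; rule subsetI)
    fix T assume "T \<in> U" then have "T \<subseteq> Y" using ultra_sub[OF U(1)] by simp
    then have Ty: "T \<subseteq> Y" .
    have "g ` T \<in> push g Y X U" using key[OF Ty, of U] \<open>T \<in> U\<close> by (rule iffD1)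
    then have "g ` T \<in> push g Y X U'" unfolding eq .
    then show "T \<in> U'" by (rule iffD2[OF key[OF Ty, of U']])
  next
    fix T assume "T \<in> U'" then have "T \<subseteq> Y" using ultra_sub[OF U(2)] by simp
    then have Ty: "T \<subseteq> Y" .
    have "g ` T \<in> push g Y X U'" using key[OF Ty, of U'] \<open>T \<in> U'\<close> by (rule iffD1)
    then have "g ` T \<in> push g Y X U" unfolding eq .
    then show "T \<in> U" by (rule iffD2[OF key[OF Ty, of U]])
  qed
qed

lemma proj_empty:
  assumes L: "local_representation B E L"
    and U: "ultrafilter_on (PiE (insert i0 {}) (\<lambda>_. B)) (Pow (PiE (insert i0 {}) (\<lambda>_. B))) U"
  shows "projection B {} i0 U = pullback B E L {} \<eta>"
proof -
  have cyl: "C = {} \<or> C = PiE {} (\<lambda>_. B)" if "C \<in> cylinders {} B" for C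
  proof -
    have "C \<subseteq> PiE {} (\<lambda>_. B)" using that unfolding cylinders_def by auto
    then show ?thesis by auto
  qed
  have "C \<in> projection B {} i0 U \<longleftrightarrow> C \<in> pullback B E L {} \<eta>" if C: "C \<in> cylinders {} B" for C
  proof (cases "C = {}")
    case True
    have a: "{\<psi> \<in> PiE (insert i0 {}) (\<lambda>_. B). restrict \<psi> {} \<in> C} = {}"
      using True by auto
    have b: "{\<psi> \<in> PiE E (\<lambda>_. B). restrict (\<lambda>i. \<psi> (\<eta> i)) {} \<in> C} = {}"
      using True by auto
    have "{} \<notin> U" using U unfolding ultrafilter_on_def by blast
    moreover have "{} \<notin> L" using L unfolding ultrafilter_on_def local_representation_def by blast
    ultimately show ?thesis using C unfolding projection_def pullback_def
      by (simp only: a b mem_Collect_eq; simp)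
  next
    case False
    then have C': "C = PiE {} (\<lambda>_. B)" using cyl C by blast
    have a: "{\<psi> \<in> PiE (insert i0 {}) (\<lambda>_. B). restrict \<psi> {} \<in> C} = PiE (insert i0 {}) (\<lambda>_. B)"
      using C' by auto
    have b: "{\<psi> \<in> PiE E (\<lambda>_. B). restrict (\<lambda>i. \<psi> (\<eta> i)) {} \<in> C} = PiE E (\<lambda>_. B)"
      using C' by auto
    have "PiE (insert i0 {}) (\<lambda>_. B) \<in> U" using U unfolding ultrafilter_on_def by blast
    moreover have "PiE E (\<lambda>_. B) \<in> L" using L unfolding ultrafilter_on_def local_representation_def by blast
    ultimately show ?thesis using C unfolding projection_def pullback_def
      by (simp only: a b mem_Collect_eq; simp)
  qed
  then show ?thesis unfolding projection_def pullback_def by blast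
qed

theorem mainTheorem10:
  fixes B :: "'b set" and E :: "'e set" and L :: "('e \<Rightarrow> 'b) set set"
  assumes "infinite B" and "exact_rep B E L"
  shows "\<exists>f. inj_on f (Pow (Pow B)) \<and> f ` Pow (Pow B) \<subseteq> E"
proof -
  define Y where "Y = {(F,\<Phi>). finite F \<and> F \<subseteq> B \<and> \<Phi> \<subseteq> Pow F}"
  define X where "X = PiE (insert (0::nat) {}) (\<lambda>_. B)"
  obtain h where h: "inj_on h (Pow (Pow B))" "\<And>S. S \<in> Pow (Pow B) \<Longrightarrow> ultrafilter_on Y (Pow Y) (h S)"
    using pospisil_Y[of B] unfolding Y_def by blast
  have "Y \<lesssim> B" unfolding Y_def by (rule Y_lepoll[OF assms(1)])
  also have "B \<approx> X" unfolding X_def by (rule eqpoll_sym, rule PiE_sing_eqpoll_self)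
  finally obtain g where g: "inj_on g Y" "g ` Y \<subseteq> X" unfolding lepoll_def by blast
  define k where "k S = push g Y X (h S)" for S
  have kU: "ultrafilter_on X (Pow X) (k S)" if "S \<in> Pow (Pow B)" for S
    unfolding k_def by (rule push_ultra[OF g(2) h(2)[OF that]])
  have kinj: "inj_on k (Pow (Pow B))"
  proof (rule inj_onI)
    fix S S' assume S: "S \<in> Pow (Pow B)" and S': "S' \<in> Pow (Pow B)" and eq: "k S = k S'"
    have "push g Y X (h S) = push g Y X (h S')" using eq unfolding k_def .
    then have "h S = h S'" by (rule push_inj[OF g h(2)[OF S] h(2)[OF S']])
    then show "S = S'" by (rule inj_onD[OF h(1) _ S S'])
  qed
  have all: "local_representation B E L \<and> separated B E L \<and>
     (\<forall>(I::nat set) i0 (\<eta>::nat \<Rightarrow> 'e) U.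
        finite I \<longrightarrow> i0 \<notin> I \<longrightarrow> \<eta> ` I \<subseteq> E \<longrightarrow>
        ultrafilter_on (PiE (insert i0 I) (\<lambda>_. B)) (Pow (PiE (insert i0 I) (\<lambda>_. B))) U \<longrightarrow>
        projection B I i0 U = pullback B E L I \<eta> \<longrightarrow>
        (\<exists>e\<in>E. pullback B E L (insert i0 I) (\<eta>(i0 := e)) = U))"
    using assms(2) unfolding exact_rep_def .
  then have ex: "local_representation B E L" by (rule conjunct1)
  from all have exact: "\<forall>(I::nat set) i0 (\<eta>::nat \<Rightarrow> 'e) U.
        finite I \<longrightarrow> i0 \<notin> I \<longrightarrow> \<eta> ` I \<subseteq> E \<longrightarrow>
        ultrafilter_on (PiE (insert i0 I) (\<lambda>_. B)) (Pow (PiE (insert i0 I) (\<lambda>_. B))) U \<longrightarrow>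
        projection B I i0 U = pullback B E L I \<eta> \<longrightarrow>
        (\<exists>e\<in>E. pullback B E L (insert i0 I) (\<eta>(i0 := e)) = U)"
    by (rule conjunct2[OF conjunct2])
  define \<eta> :: "nat \<Rightarrow> 'e" where "\<eta> = (\<lambda>_. undefined)"
  have realize: "\<exists>e. e \<in> E \<and> pullback B E L (insert 0 {}) (\<eta>(0 := e)) = k S" if "S \<in> Pow (Pow B)" for S
  proof -
    have u: "ultrafilter_on (PiE (insert 0 {}) (\<lambda>_. B)) (Pow (PiE (insert 0 {}) (\<lambda>_. B))) (k S)"
      using kU[OF that] unfolding X_def .
    have p: "projection B {} 0 (k S) = pullback B E L {} \<eta>"
      by (rule proj_empty[OF ex u])
    have "\<exists>e\<in>E. pullback B E L (insert 0 {}) (\<eta>(0 := e)) = k S"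
      using exact[rule_format, of "{}" 0 \<eta> "k S"] u p by simp
    then show ?thesis by blast
  qed
  define f where "f S = (SOME e. e \<in> E \<and> pullback B E L (insert 0 {}) (\<eta>(0 := e)) = k S)" for S
  have f: "f S \<in> E \<and> pullback B E L (insert 0 {}) (\<eta>(0 := f S)) = k S" if "S \<in> Pow (Pow B)" for S
    unfolding f_def by (rule someI_ex[OF realize[OF that]])
  have "inj_on f (Pow (Pow B))"
  proof (rule inj_onI)
    fix S S' assume SS: "S \<in> Pow (Pow B)" "S' \<in> Pow (Pow B)" "f S = f S'"
    have "k S = pullback B E L (insert 0 {}) (\<eta>(0 := f S))" using f[OF SS(1)] by simp
    also have "\<dots> = k S'" using f[OF SS(2)] SS(3) by simp
    finally show "S = S'" by (rule inj_onD[OF kinj _ SS(1) SS(2)])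
  qed
  moreover have "f ` Pow (Pow B) \<subseteq> E" using f by blast
  ultimately show ?thesis by blast
qed

end
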